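(* In the setting of the context, let $\mathcal{C}=\sum_{j=1}^K\lambda_jP_j^{2/\alpha}C(\alpha,\Psi_j)$ and $s_{x_k}=\beta_k\|x_k\|^{\alpha}P_k^{-1}$, and let $\mathcal{A}_k=\sum_{i=0}^{\Delta_k-1}\frac{1}{i!}\int_{\mathbb{R}^2}(-s_{x_k})^i\frac{d^i}{ds^i}\mathcal{L}_I(s)\big|_{s=s_{x_k}}dx_k$. If $\Delta_k=1$, then $$\mathcal{A}_k=\frac{\pi P_k^{2/\alpha}\beta_k^{-2/\alpha}}{\sum_{j=1}^K\lambda_jP_j^{2/\alpha}C(\alpha,\Psi_j)}.$$ If $\Delta_k>1$, then $$\mathcal{A}_k=\sum_{i=0}^{\Delta_k-1}\frac{1}{i!}\sum_{\substack{j_1,\dots,j_i\ge0\\ j_1+2j_2+\cdots+ij_i=i}}\frac{i!}{j_1!\cdots j_i!}\int_{\mathbb{R}^2}(-s_{x_k})^ie^{-\mathcal{C}s_{x_k}^{2/\alpha}}\prod_{\ell=1}^i\frac{1}{(\ell!)^{j_\ell}}\Big(-\mathcal{C}s_{x_k}^{\frac{2}{\alpha}-\ell}\prod_{n=0}^{\ell-1}\big(\tfrac{2}{\alpha}-n\big)\Big)^{j_\ell}dx_k,$$ where for $i=0$ the inner sum consists of the single empty tuple with empty product equal to $1$.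
   Context: Tiers $k=1,\dots,K$ of base stations form independent homogeneous Poisson point processes in $\mathbb{R}^2$ with densities $\lambda_k>0$ and per-user transmit powers $P_k>0$; target SIRs $\beta_k>0$; path loss exponent $\alpha>2$; positive integer parameters $\Delta_k,\Psi_k$. Each BS at $y$ of tier $j$ carries an interfering channel-power mark $g_{jy}\sim\Gamma(\Psi_j,1)$ (Gamma with shape $\Psi_j$, scale $1$), i.i.d. and independent of the point processes. $\mathcal{L}_I(s)=\mathbb{E}[e^{-sI}]$ with $I=\sum_{j}\sum_{y\in\Phi_j}P_jg_{jy}\|y\|^{-\alpha}$, which equals $\exp(-s^{2/\alpha}\mathcal{C})$. $C(\alpha,\Psi)=\frac{2\pi}{\alpha}\sum_{m=1}^{\Psi}\binom{\Psi}{m}B\big(\Psi-m+\tfrac{2}{\alpha},m-\tfrac{2}{\alpha}\big)$ with $B$ Euler's Beta function. *)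

theory Defs
  imports "HOL-Analysis.Analysis"
begin

definition Ccoef :: "real \<Rightarrow> nat \<Rightarrow> real" where
  "Ccoef \<alpha> \<Psi> = 2 * pi / \<alpha> *
     (\<Sum>m = 1..\<Psi>. real (\<Psi> choose m) * Beta (real \<Psi> - real m + 2 / \<alpha>) (real m - 2 / \<alpha>))"

definition Ctot :: "nat \<Rightarrow> (nat \<Rightarrow> real) \<Rightarrow> (nat \<Rightarrow> real) \<Rightarrow> real \<Rightarrow> (nat \<Rightarrow> nat) \<Rightarrow> real" where
  "Ctot K lam P \<alpha> \<Psi> = (\<Sum>j = 1..K. lam j * P j powr (2 / \<alpha>) * Ccoef \<alpha> (\<Psi> j))"

definition LapI :: "real \<Rightarrow> real \<Rightarrow> real \<Rightarrow> real" where
  "LapI Cc \<alpha> s = exp (- (s powr (2 / \<alpha>)) * Cc)"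

definition sx :: "real \<Rightarrow> real \<Rightarrow> real \<Rightarrow> real ^ 2 \<Rightarrow> real" where
  "sx \<beta> Pk \<alpha> x = \<beta> * norm x powr \<alpha> / Pk"

definition Ak :: "real \<Rightarrow> real \<Rightarrow> real \<Rightarrow> real \<Rightarrow> nat \<Rightarrow> real" where
  "Ak Cc \<alpha> \<beta> Pk \<Delta> = (\<Sum>i < \<Delta>. 1 / fact i *
      (\<integral>x. (- sx \<beta> Pk \<alpha> x) ^ i * (deriv ^^ i) (LapI Cc \<alpha>) (sx \<beta> Pk \<alpha> x) \<partial>(lborel :: (real ^ 2) measure)))"

definition fdb_tuples :: "nat \<Rightarrow> (nat \<Rightarrow> nat) set" where
  "fdb_tuples i = {j \<in> PiE {1..i} (\<lambda>_. {..i}). (\<Sum>l = 1..i. l * j l) = i}"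

end

theory Submission
  imports Defs "HOL-Probability.Probability" "HOL-Computational_Algebra.Formal_Power_Series"
begin

lemma gauss1_integral:
  fixes c :: real assumes c: "c > 0"
  shows "integrable lborel (\<lambda>x::real. exp (- c * x\<^sup>2))"
    and "(\<integral>x. exp (- c * x\<^sup>2) \<partial>lborel) = sqrt (pi / c)"
proof -
  define \<sigma> where "\<sigma> = sqrt (1 / (2*c))"
  have s2: "\<sigma>\<^sup>2 = 1/(2*c)" using c by (simp add: \<sigma>_def)
  have sp: "\<sigma> > 0" using c by (simp add: \<sigma>_def)
  have eq: "\<And>x. exp (- c * x\<^sup>2) = sqrt (pi / c) * normal_density 0 \<sigma> x"
    unfolding normal_density_def s2 using c
    by (simp add: field_simps real_sqrt_divide real_sqrt_mult)
  show "integrable lborel (\<lambda>x::real. exp (- c * x\<^sup>2))"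
    unfolding eq using integrable_normal_density[OF sp, of 0] by simp
  show "(\<integral>x. exp (- c * x\<^sup>2) \<partial>lborel) = sqrt (pi / c)"
    unfolding eq using integral_normal_density[OF sp, of 0] by simp
qed

lemma gauss1_nn:
  fixes c :: real assumes c: "c > 0"
  shows "(\<integral>\<^sup>+x. ennreal (exp (- c * x\<^sup>2)) \<partial>lborel) = ennreal (sqrt (pi / c))"
  using nn_integral_eq_integral[OF gauss1_integral(1)[OF c]] gauss1_integral(2)[OF c] by simp

lemma gauss2_nn:
  fixes c :: real assumes c: "c > 0"
  shows "(\<integral>\<^sup>+x. ennreal (exp (- c * (norm x)\<^sup>2)) \<partial>(lborel :: (real^2) measure)) = ennreal (pi / c)"
proof -
  have "\<And>x::real^2. ennreal (exp (- c * (norm x)\<^sup>2)) = (\<Prod>b\<in>Basis. ennreal (exp (- c * (x \<bullet> b)\<^sup>2)))"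
  proof -
    fix x :: "real^2"
    have "(norm x)\<^sup>2 = (\<Sum>b\<in>Basis. (x \<bullet> b)\<^sup>2)"
      using euclidean_inner[of x x] by (simp add: power2_norm_eq_inner[symmetric] power2_eq_square)
    then have "exp (- c * (norm x)\<^sup>2) = (\<Prod>b\<in>Basis. exp (- c * (x \<bullet> b)\<^sup>2))"
      by (simp add: sum_distrib_left exp_sum[symmetric] sum_negf)
    then show "ennreal (exp (- c * (norm x)\<^sup>2)) = (\<Prod>b\<in>Basis. ennreal (exp (- c * (x \<bullet> b)\<^sup>2)))"
      by (simp add: prod_ennreal)
  qed
  then have "(\<integral>\<^sup>+x. ennreal (exp (- c * (norm x)\<^sup>2)) \<partial>(lborel :: (real^2) measure))
      = (\<integral>\<^sup>+x. (\<Prod>b\<in>Basis. (\<lambda>t. ennreal (exp (- c * t\<^sup>2))) (x \<bullet> b)) \<partial>(lborel :: (real^2) measure))"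
    by simp
  also have "\<dots> = (\<Prod>b\<in>(Basis::(real^2) set). (\<integral>\<^sup>+t. ennreal (exp (- c * t\<^sup>2)) \<partial>lborel))"
    by (rule nn_integral_lborel_prod) auto
  also have "\<dots> = ennreal (sqrt (pi / c)) ^ 2"
    using gauss1_nn[OF c] by simp
  also have "\<dots> = ennreal (pi / c)"
    using c by (subst ennreal_power) auto
  finally show ?thesis .
qed

lemma gauss2:
  fixes c :: real assumes c: "c > 0"
  shows "integrable (lborel :: (real^2) measure) (\<lambda>x. exp (- c * (norm x)\<^sup>2))"
    and "(\<integral>x. exp (- c * (norm x)\<^sup>2) \<partial>(lborel :: (real^2) measure)) = pi / c"
proof -
  show i: "integrable (lborel :: (real^2) measure) (\<lambda>x. exp (- c * (norm x)\<^sup>2))"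
    by (rule integrableI_nn_integral_finite[OF _ _ gauss2_nn[OF c]]) auto
  have "ennreal (\<integral>x. exp (- c * (norm x)\<^sup>2) \<partial>(lborel :: (real^2) measure)) = ennreal (pi / c)"
    using nn_integral_eq_integral[OF i] gauss2_nn[OF c] by simp
  then show "(\<integral>x. exp (- c * (norm x)\<^sup>2) \<partial>(lborel :: (real^2) measure)) = pi / c"
    using c by (subst (asm) ennreal_inj) auto
qed

definition Fexp :: "nat \<Rightarrow> real \<Rightarrow> real fps" where
  "Fexp l c = Abs_fps (\<lambda>k. if l dvd k then c ^ (k div l) / fact (k div l) else 0)"

definition Tset :: "nat set \<Rightarrow> (nat \<Rightarrow> nat) \<Rightarrow> nat \<Rightarrow> (nat \<Rightarrow> nat) set" where
  "Tset I w n = {j \<in> PiE I (\<lambda>_. {..n}). (\<Sum>l\<in>I. w l * j l) = n}"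

lemma finite_Tset: "finite I \<Longrightarrow> finite (Tset I w n)"
  unfolding Tset_def by (rule finite_subset[of _ "PiE I (\<lambda>_. {..n})"]) (auto intro!: finite_PiE)

lemma le_mult_pos: "0 < (w::nat) \<Longrightarrow> m \<le> w * m"
  by (cases w) auto

lemma prod_Fexp_nth:
  assumes "finite I" "\<forall>l\<in>I. w l > 0"
  shows "fps_nth (\<Prod>l\<in>I. Fexp (w l) (c l)) n = (\<Sum>j\<in>Tset I w n. \<Prod>l\<in>I. c l ^ j l / fact (j l))"
  using assms
proof (induction I arbitrary: n rule: finite_induct)
  case empty
  have "Tset {} w n = (if n = 0 then {\<lambda>_. undefined} else {})"
    unfolding Tset_def by auto
  then show ?case by simp
next
  case (insert a I)
  have wa: "w a > 0" using insert.prems by auto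
  have IH: "\<And>n. fps_nth (\<Prod>l\<in>I. Fexp (w l) (c l)) n = (\<Sum>j\<in>Tset I w n. \<Prod>l\<in>I. c l ^ j l / fact (j l))"
    using insert.IH insert.prems by auto
  define M where "M = {m\<in>{..n}. w a * m \<le> n}"
  have finM: "finite M" unfolding M_def by auto
  define G where "G = (\<lambda>m. c a ^ m / fact m)"
  have "fps_nth (\<Prod>l\<in>insert a I. Fexp (w l) (c l)) n
      = (\<Sum>i=0..n. fps_nth (Fexp (w a) (c a)) i * fps_nth (\<Prod>l\<in>I. Fexp (w l) (c l)) (n - i))"
    using insert.hyps by (simp add: fps_mult_nth)
  also have "\<dots> = (\<Sum>i\<in>{i\<in>{0..n}. w a dvd i}. G (i div w a) * fps_nth (\<Prod>l\<in>I. Fexp (w l) (c l)) (n - i))"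
  proof -
    have "\<And>i. fps_nth (Fexp (w a) (c a)) i = (if w a dvd i then G (i div w a) else 0)"
      by (simp add: Fexp_def G_def)
    then have "(\<Sum>i=0..n. fps_nth (Fexp (w a) (c a)) i * fps_nth (\<Prod>l\<in>I. Fexp (w l) (c l)) (n - i))
       = (\<Sum>i=0..n. if w a dvd i then G (i div w a) * fps_nth (\<Prod>l\<in>I. Fexp (w l) (c l)) (n - i) else 0)"
      by (intro sum.cong) auto
    also have "\<dots> = (\<Sum>i\<in>{i\<in>{0..n}. w a dvd i}. G (i div w a) * fps_nth (\<Prod>l\<in>I. Fexp (w l) (c l)) (n - i))"
      by (rule sum.inter_filter[symmetric]) simp
    finally show ?thesis .
  qed
  also have "{i\<in>{0..n}. w a dvd i} = (\<lambda>m. w a * m) ` M"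
  proof
    show "{i \<in> {0..n}. w a dvd i} \<subseteq> (*) (w a) ` M"
    proof
      fix i assume "i \<in> {i \<in> {0..n}. w a dvd i}"
      then obtain m where m: "i = w a * m" "i \<le> n" by auto
      then have "m \<le> n" using wa le_mult_pos[of "w a" m] by linarith
      then show "i \<in> (*) (w a) ` M" using m unfolding M_def by auto
    qed
  qed (auto simp: M_def)
  also have "(\<Sum>i\<in>(\<lambda>m. w a * m) ` M. G (i div w a) * fps_nth (\<Prod>l\<in>I. Fexp (w l) (c l)) (n - i))
      = (\<Sum>m\<in>M. G m * fps_nth (\<Prod>l\<in>I. Fexp (w l) (c l)) (n - w a * m))"
    using wa by (subst sum.reindex) (auto simp: inj_on_def)
  also have "\<dots> = (\<Sum>m\<in>M. \<Sum>j\<in>Tset I w (n - w a * m). G m * (\<Prod>l\<in>I. c l ^ j l / fact (j l)))"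
    by (simp add: IH sum_distrib_left)
  also have "\<dots> = (\<Sum>p\<in>Sigma M (\<lambda>m. Tset I w (n - w a * m)). G (fst p) * (\<Prod>l\<in>I. c l ^ snd p l / fact (snd p l)))"
    using finM insert.hyps(1) by (subst sum.Sigma) (auto intro: finite_Tset simp: case_prod_beta)
  also have "\<dots> = (\<Sum>j\<in>Tset (insert a I) w n. \<Prod>l\<in>insert a I. c l ^ j l / fact (j l))"
  proof (rule sum.reindex_bij_witness[where j = "\<lambda>p. (snd p)(a := fst p)" and i = "\<lambda>f. (f a, restrict f I)"])
    fix p assume p: "p \<in> Sigma M (\<lambda>m. Tset I w (n - w a * m))"
    then have ext: "snd p \<in> extensional I" unfolding Tset_def by (auto simp: PiE_def)
    show "(((snd p)(a := fst p)) a, restrict ((snd p)(a := fst p)) I) = p"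
      using ext insert.hyps(2) by (cases p) (auto simp: restrict_def extensional_def fun_eq_iff)
    have s: "(\<Sum>l\<in>insert a I. w l * ((snd p)(a := fst p)) l) = w a * fst p + (\<Sum>l\<in>I. w l * snd p l)"
      using insert.hyps by (simp add: sum.insert) (intro sum.cong, auto)
    show "(snd p)(a := fst p) \<in> Tset (insert a I) w n"
      using p s unfolding Tset_def M_def by (auto simp: PiE_iff extensional_def)
    show "(\<Prod>l\<in>insert a I. c l ^ ((snd p)(a := fst p)) l / fact (((snd p)(a := fst p)) l))
        = G (fst p) * (\<Prod>l\<in>I. c l ^ snd p l / fact (snd p l))"
    proof -
      have "(\<Prod>l\<in>I. c l ^ ((snd p)(a := fst p)) l / fact (((snd p)(a := fst p)) l))
          = (\<Prod>l\<in>I. c l ^ snd p l / fact (snd p l))"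
        using insert.hyps by (intro prod.cong) auto
      then show ?thesis using insert.hyps unfolding G_def by (simp add: prod.insert)
    qed
  next
    fix f assume f: "f \<in> Tset (insert a I) w n"
    then have ext: "f \<in> extensional (insert a I)" unfolding Tset_def by (auto simp: PiE_def)
    show "(snd (f a, restrict f I))(a := fst (f a, restrict f I)) = f"
      using ext insert.hyps(2) by (auto simp: restrict_def extensional_def fun_eq_iff)
    have s: "(\<Sum>l\<in>insert a I. w l * f l) = w a * f a + (\<Sum>l\<in>I. w l * f l)"
      using insert.hyps by simp
    have fs: "(\<Sum>l\<in>insert a I. w l * f l) = n" using f unfolding Tset_def by auto
    have bnd: "\<And>l. l \<in> I \<Longrightarrow> f l \<le> n - w a * f a"
    proof -
      fix l assume l: "l \<in> I"
      have "w l * f l \<le> (\<Sum>l\<in>I. w l * f l)"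
        using l insert.hyps(1) by (intro member_le_sum) auto
      moreover have "f l \<le> w l * f l" using insert.prems l le_mult_pos[of "w l" "f l"] by auto
      ultimately show "f l \<le> n - w a * f a" using s fs by linarith
    qed
    have fa: "f a \<le> n" "w a * f a \<le> n" using s fs wa le_mult_pos[of "w a" "f a"]
      by linarith+
    show "(f a, restrict f I) \<in> Sigma M (\<lambda>m. Tset I w (n - w a * m))"
      using fa bnd s fs unfolding M_def Tset_def by (auto simp: PiE_iff)
  qed
  finally show ?case .
qed

lemma Fexp_deriv:
  assumes l: "l > 0"
  shows "fps_deriv (Fexp l c) = fps_const (of_nat l * c) * (fps_X ^ (l - 1) * Fexp l c)"
proof (rule fps_ext)
  fix k
  show "fps_nth (fps_deriv (Fexp l c)) k = fps_nth (fps_const (of_nat l * c) * (fps_X ^ (l - 1) * Fexp l c)) k"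
  proof (cases "l dvd Suc k")
    case True
    then obtain m where m: "Suc k = l * m" by auto
    then have m0: "m > 0" by (cases m) auto
    have kk: "\<not> k < l - 1" using m m0 l by (cases m) auto
    have e1: "Suc k div l = m" using m l by simp
    have e2: "k - (l - 1) = l * (m - 1)" using m m0 l by (cases m) (auto simp: algebra_simps)
    have e3: "l * (m - 1) div l = m - 1" using l by simp
    have "fps_nth (fps_deriv (Fexp l c)) k = of_nat (Suc k) * (c ^ m / fact m)"
      using True e1 by (simp add: Fexp_def fps_deriv_nth)
    also have "\<dots> = of_nat l * c * (c ^ (m - 1) / fact (m - 1))"
    proof -
      obtain m' where m': "m = Suc m'" using m0 by (cases m) auto
      have r: "real (Suc k) = real l * real (Suc m')" using m m' by (metis of_nat_mult)
      have f: "(fact (Suc m') :: real) = real (Suc m') * fact m'" by simp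
      have fp: "(fact m' :: real) > 0" by simp
      have cancel: "\<And>a b x y::real. x \<noteq> 0 \<Longrightarrow> a * x * (b / (x * y)) = a * (b / y)" by simp
      have "real l * real (Suc m') * (c ^ Suc m' / (real (Suc m') * fact m')) = real l * (c ^ Suc m' / fact m')"
        by (rule cancel) simp
      then show ?thesis unfolding m' r f by (simp add: power_Suc)
    qed
    also have "\<dots> = fps_nth (fps_const (of_nat l * c) * (fps_X ^ (l - 1) * Fexp l c)) k"
      using kk e2 e3 by (simp add: fps_X_power_mult_nth Fexp_def)
    finally show ?thesis .
  next
    case False
    have "\<not> l dvd (k - (l - 1))" if "\<not> k < l - 1"
    proof
      assume "l dvd (k - (l - 1))"
      then have "l dvd (k - (l - 1) + l)" by simp
      also have "k - (l - 1) + l = Suc k" using that l by simp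
      finally show False using False by simp
    qed
    then show ?thesis using False
      by (simp add: Fexp_def fps_deriv_nth fps_X_power_mult_nth)
  qed
qed

definition Dser :: "(nat \<Rightarrow> real) \<Rightarrow> nat \<Rightarrow> real fps" where
  "Dser c N = (\<Sum>l\<in>{1..N}. fps_const (of_nat l * c l) * fps_X ^ (l - 1))"

definition Psi :: "(nat \<Rightarrow> real) \<Rightarrow> nat \<Rightarrow> real fps" where
  "Psi c N = (\<Prod>l\<in>{1..N}. Fexp l (c l))"

lemma Psi_deriv: "fps_deriv (Psi c N) = Dser c N * Psi c N"
proof (induction N)
  case 0 then show ?case by (simp add: Psi_def Dser_def)
next
  case (Suc N)
  have P: "Psi c (Suc N) = Psi c N * Fexp (Suc N) (c (Suc N))"
    unfolding Psi_def by (simp add: prod.cl_ivl_Suc)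
  have D: "Dser c (Suc N) = Dser c N + fps_const (of_nat (Suc N) * c (Suc N)) * fps_X ^ N"
    unfolding Dser_def by (simp add: sum.cl_ivl_Suc)
  show ?case unfolding P D fps_deriv_mult Suc.IH Fexp_deriv[OF zero_less_Suc]
    by (simp add: algebra_simps)
qed

lemma Dser_nth: "fps_nth (Dser c N) i = (if i < N then of_nat (Suc i) * c (Suc i) else 0)"
proof -
  have "fps_nth (Dser c N) i = (\<Sum>l\<in>{1..N}. if l = Suc i then of_nat l * c l else 0)"
    unfolding Dser_def fps_sum_nth by (intro sum.cong) (auto simp: fps_X_power_mult_right_nth)
  also have "\<dots> = (if i < N then of_nat (Suc i) * c (Suc i) else 0)"
    by (subst sum.delta) auto
  finally show ?thesis .
qed

lemma Psi_rec:
  assumes "k < N"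
  shows "of_nat (Suc k) * fps_nth (Psi c N) (Suc k)
       = (\<Sum>i=0..k. of_nat (Suc i) * c (Suc i) * fps_nth (Psi c N) (k - i))"
proof -
  have "of_nat (Suc k) * fps_nth (Psi c N) (Suc k) = fps_nth (fps_deriv (Psi c N)) k"
    by (simp add: fps_deriv_nth)
  also have "\<dots> = (\<Sum>i=0..k. fps_nth (Dser c N) i * fps_nth (Psi c N) (k - i))"
    by (simp add: Psi_deriv fps_mult_nth)
  also have "\<dots> = (\<Sum>i=0..k. of_nat (Suc i) * c (Suc i) * fps_nth (Psi c N) (k - i))"
    using assms by (intro sum.cong) (auto simp: Dser_nth)
  finally show ?thesis .
qed

lemma Psi_0: "fps_nth (Psi c N) 0 = 1"
  unfolding Psi_def by (induction N) (auto simp: prod.cl_ivl_Suc Fexp_def)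

definition yf :: "real \<Rightarrow> real \<Rightarrow> nat \<Rightarrow> real \<Rightarrow> real" where
  "yf C a l s = - C * s powr (a - real l) * (\<Prod>n<l. a - real n)"

lemma yf_deriv:
  assumes s: "s > 0"
  shows "(yf C a l has_real_derivative yf C a (Suc l) s) (at s)"
proof -
  have pw: "((\<lambda>s. s powr (a - real l)) has_real_derivative (a - real l) * s powr (a - real l - 1)) (at s)"
    by (rule has_real_derivative_powr[OF s])
  have "((\<lambda>s. (- C * (\<Prod>n<l. a - real n)) * s powr (a - real l)) has_real_derivative
        (- C * (\<Prod>n<l. a - real n)) * ((a - real l) * s powr (a - real l - 1))) (at s)"
    by (rule DERIV_cmult[OF pw])
  then have F: "((\<lambda>s. - C * s powr (a - real l) * (\<Prod>n<l. a - real n)) has_real_derivative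
        - C * ((a - real l) * s powr (a - real l - 1)) * (\<Prod>n<l. a - real n)) (at s)"
    by (simp add: algebra_simps)
  have eq: "- C * ((a - real l) * s powr (a - real l - 1)) * (\<Prod>n<l. a - real n) = yf C a (Suc l) s"
  proof -
    have e: "a - real (Suc l) = a - real l - 1" by simp
    show ?thesis unfolding yf_def e prod.lessThan_Suc by (simp only: ac_simps)
  qed
  have yfe: "yf C a l = (\<lambda>s. - C * s powr (a - real l) * (\<Prod>n<l. a - real n))"
    by (rule ext) (simp add: yf_def)
  show ?thesis unfolding yfe using F[unfolded eq] .
qed

lemma LapI_deriv:
  assumes s: "s > 0"
  shows "(LapI C \<alpha> has_real_derivative yf C (2/\<alpha>) 1 s * LapI C \<alpha> s) (at s)"
proof -
  have "((\<lambda>s. exp (- (s powr (2 / \<alpha>)) * C)) has_real_derivative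
        exp (- (s powr (2 / \<alpha>)) * C) * (- ((2/\<alpha>) * s powr (2/\<alpha> - 1)) * C)) (at s)"
    using s by (intro derivative_eq_intros has_real_derivative_powr) auto
  moreover have "exp (- (s powr (2 / \<alpha>)) * C) * (- ((2/\<alpha>) * s powr (2/\<alpha> - 1)) * C)
      = yf C (2/\<alpha>) 1 s * LapI C \<alpha> s"
    unfolding yf_def LapI_def by (simp add: algebra_simps)
  ultimately show ?thesis unfolding LapI_def[abs_def] by simp
qed

lemma leibniz_sum:
  fixes f g :: "nat \<Rightarrow> real"
  shows "(\<Sum>k=0..n. real (n choose k) * (f (Suc k) * g (n - k) + f k * g (Suc (n - k))))
       = (\<Sum>k=0..Suc n. real (Suc n choose k) * f k * g (Suc n - k))"
proof -
  have A: "(\<Sum>k=0..n. real (n choose k) * f k * g (Suc n - k))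
      = f 0 * g (Suc n) + (\<Sum>k=0..n. real (n choose Suc k) * f (Suc k) * g (n - k))"
  proof -
    have "(\<Sum>k=0..n. real (n choose k) * f k * g (Suc n - k))
        = (\<Sum>k=0..Suc n. real (n choose k) * f k * g (Suc n - k))"
      by (subst sum.atLeast0_atMost_Suc) simp
    also have "\<dots> = f 0 * g (Suc n) + (\<Sum>k=0..n. real (n choose Suc k) * f (Suc k) * g (n - k))"
      by (subst sum.atLeast0_atMost_Suc_shift) simp
    finally show ?thesis .
  qed
  have "(\<Sum>k=0..Suc n. real (Suc n choose k) * f k * g (Suc n - k))
      = f 0 * g (Suc n) + (\<Sum>k=0..n. real (Suc n choose Suc k) * f (Suc k) * g (n - k))"
    by (subst sum.atLeast0_atMost_Suc_shift) simp
  also have "\<dots> = f 0 * g (Suc n) + (\<Sum>k=0..n. real (n choose k) * f (Suc k) * g (n - k))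
      + (\<Sum>k=0..n. real (n choose Suc k) * f (Suc k) * g (n - k))"
    by (simp add: sum.distrib algebra_simps)
  also have "\<dots> = (\<Sum>k=0..n. real (n choose k) * f (Suc k) * g (n - k))
      + (\<Sum>k=0..n. real (n choose k) * f k * g (Suc n - k))"
    using A by simp
  also have "\<dots> = (\<Sum>k=0..n. real (n choose k) * (f (Suc k) * g (n - k) + f k * g (Suc (n - k))))"
    by (simp add: sum.distrib[symmetric] algebra_simps) (intro sum.cong, auto simp: Suc_diff_le)
  finally show ?thesis by simp
qed

lemma leibniz_step:
  fixes f g :: "nat \<Rightarrow> real \<Rightarrow> real"
  assumes f: "\<And>k. k \<le> n \<Longrightarrow> (f k has_real_derivative f (Suc k) x) (at x)"
    and g: "\<And>k. k \<le> n \<Longrightarrow> (g k has_real_derivative g (Suc k) x) (at x)"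
  shows "((\<lambda>x. \<Sum>k=0..n. real (n choose k) * f k x * g (n - k) x) has_real_derivative
          (\<Sum>k=0..Suc n. real (Suc n choose k) * f k x * g (Suc n - k) x)) (at x)"
proof -
  have "((\<lambda>x. \<Sum>k=0..n. real (n choose k) * f k x * g (n - k) x) has_real_derivative
          (\<Sum>k=0..n. real (n choose k) * (f (Suc k) x * g (n - k) x + f k x * g (Suc (n - k)) x))) (at x)"
  proof (rule DERIV_sum)
    fix k assume "k \<in> {0..n}"
    then have k: "k \<le> n" by simp
    have d: "((\<lambda>x. f k x * g (n - k) x) has_real_derivative
           (f (Suc k) x * g (n - k) x + f k x * g (Suc (n - k)) x)) (at x)"
      using DERIV_mult[OF f[OF k] g[of "n - k"]] by (simp add: algebra_simps)
    show "((\<lambda>x. real (n choose k) * f k x * g (n - k) x) has_real_derivative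
           real (n choose k) * (f (Suc k) x * g (n - k) x + f k x * g (Suc (n - k)) x)) (at x)"
      using DERIV_cmult[OF d, of "real (n choose k)"] by (simp add: mult.assoc)
  qed
  then show ?thesis using leibniz_sum[of n "\<lambda>k. f k x" "\<lambda>k. g k x"] by simp
qed

lemma hh_main:
  "\<forall>m\<le>n. \<forall>s>0. ((deriv ^^ m) (LapI C \<alpha>) has_real_derivative (deriv ^^ Suc m) (LapI C \<alpha>) s) (at s)
      \<and> (deriv ^^ Suc m) (LapI C \<alpha>) s
        = (\<Sum>k=0..m. real (m choose k) * yf C (2/\<alpha>) (Suc k) s * (deriv ^^ (m - k)) (LapI C \<alpha>) s)"
proof (induction n)
  case 0
  show ?case
  proof (intro allI impI conjI)
    fix m :: nat and s :: real assume m: "m \<le> 0" and s: "s > 0"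
    have d: "(LapI C \<alpha> has_real_derivative yf C (2/\<alpha>) 1 s * LapI C \<alpha> s) (at s)"
      using LapI_deriv[OF s] .
    then have dd: "deriv (LapI C \<alpha>) s = yf C (2/\<alpha>) 1 s * LapI C \<alpha> s" by (rule DERIV_imp_deriv)
    show "((deriv ^^ m) (LapI C \<alpha>) has_real_derivative (deriv ^^ Suc m) (LapI C \<alpha>) s) (at s)"
      using m d dd by simp
    show "(deriv ^^ Suc m) (LapI C \<alpha>) s
        = (\<Sum>k=0..m. real (m choose k) * yf C (2/\<alpha>) (Suc k) s * (deriv ^^ (m - k)) (LapI C \<alpha>) s)"
      using m dd by simp
  qed
next
  case (Suc n)
  let ?h = "LapI C \<alpha>"
  let ?f = "\<lambda>k. yf C (2/\<alpha>) (Suc k)"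
  let ?g = "\<lambda>k. (deriv ^^ k) ?h"
  let ?L = "\<lambda>x. \<Sum>k=0..n. real (n choose k) * ?f k x * ?g (n - k) x"
  have new: "((deriv ^^ Suc n) ?h has_real_derivative (deriv ^^ Suc (Suc n)) ?h s) (at s)
      \<and> (deriv ^^ Suc (Suc n)) ?h s
        = (\<Sum>k=0..Suc n. real (Suc n choose k) * ?f k s * ?g (Suc n - k) s)" if s: "s > 0" for s
  proof -
    have L: "(?L has_real_derivative (\<Sum>k=0..Suc n. real (Suc n choose k) * ?f k s * ?g (Suc n - k) s)) (at s)"
    proof (rule leibniz_step)
      fix k assume k: "k \<le> n"
      show "(?f k has_real_derivative ?f (Suc k) s) (at s)" using yf_deriv[OF s] by simp
      show "(?g k has_real_derivative ?g (Suc k) s) (at s)" using Suc.IH s k by blast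
    qed
    have "((deriv ^^ Suc n) ?h has_real_derivative (\<Sum>k=0..Suc n. real (Suc n choose k) * ?f k s * ?g (Suc n - k) s)) (at s)"
      by (rule has_field_derivative_transform_within_open[OF L, of "{0<..}"]) (use s Suc.IH in auto)
    moreover then have "(deriv ^^ Suc (Suc n)) ?h s = (\<Sum>k=0..Suc n. real (Suc n choose k) * ?f k s * ?g (Suc n - k) s)"
      using DERIV_imp_deriv by simp
    ultimately show ?thesis by simp
  qed
  show ?case
  proof (intro allI impI)
    fix m :: nat and s :: real assume m: "m \<le> Suc n" and s: "s > 0"
    show "((deriv ^^ m) ?h has_real_derivative (deriv ^^ Suc m) ?h s) (at s) \<and>
          (deriv ^^ Suc m) ?h s = (\<Sum>k=0..m. real (m choose k) * yf C (2/\<alpha>) (Suc k) s * (deriv ^^ (m - k)) ?h s)"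
    proof (cases "m \<le> n")
      case True then show ?thesis using Suc.IH s by blast
    next
      case False then have mm: "m = Suc n" using m by simp
      show ?thesis unfolding mm using new[OF s] by blast
    qed
  qed
qed

lemma term_eq:
  assumes "i \<le> k"
  shows "real (k choose i) * y * (H * fact (k - i) * p) = H * fact k * (real (Suc i) * (y / fact (Suc i)) * p)"
proof -
  have b: "real (k choose i) = fact k / (fact i * fact (k - i))" using binomial_fact[OF assms] by simp
  define x where "x = real (Suc i)"
  have x: "x > 0" unfolding x_def by simp
  have f: "(fact (Suc i) :: real) = x * fact i" unfolding x_def by simp
  have p1: "(fact i :: real) > 0" "(fact (k - i) :: real) > 0" by simp_all
  show ?thesis unfolding b f x_def[symmetric] using p1 x by (simp add: field_simps)
qed

lemma hh_closed:
  assumes s: "s > 0"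
  shows "m \<le> N \<Longrightarrow> (deriv ^^ m) (LapI C \<alpha>) s
     = LapI C \<alpha> s * fact m * fps_nth (Psi (\<lambda>l. yf C (2/\<alpha>) l s / fact l) N) m"
proof (induction m rule: less_induct)
  case (less m)
  let ?c = "\<lambda>l. yf C (2/\<alpha>) l s / fact l"
  let ?P = "fps_nth (Psi ?c N)"
  let ?h = "LapI C \<alpha>"
  show ?case
  proof (cases m)
    case 0 then show ?thesis by (simp add: Psi_0)
  next
    case (Suc k)
    have kN: "k < N" using less.prems Suc by simp
    have "(deriv ^^ m) ?h s = (\<Sum>i=0..k. real (k choose i) * yf C (2/\<alpha>) (Suc i) s * (deriv ^^ (k - i)) ?h s)"
      using hh_main[of k C \<alpha>] s unfolding Suc by blast
    also have "\<dots> = (\<Sum>i=0..k. real (k choose i) * yf C (2/\<alpha>) (Suc i) s * (?h s * fact (k - i) * ?P (k - i)))"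
      by (intro sum.cong refl, subst less.IH) (use Suc less.prems in auto)
    also have "\<dots> = (\<Sum>i=0..k. ?h s * fact k * (real (Suc i) * ?c (Suc i) * ?P (k - i)))"
      by (intro sum.cong refl term_eq) auto
    also have "\<dots> = ?h s * fact k * (\<Sum>i=0..k. real (Suc i) * ?c (Suc i) * ?P (k - i))"
      by (simp add: sum_distrib_left)
    also have "\<dots> = ?h s * fact k * (real (Suc k) * ?P (Suc k))"
      using Psi_rec[OF kN, of ?c] by simp
    also have "\<dots> = ?h s * fact m * ?P m"
      unfolding Suc by (simp add: algebra_simps)
    finally show ?thesis .
  qed
qed

lemma faa:
  assumes s: "s > 0"
  shows "(deriv ^^ n) (LapI C \<alpha>) s = LapI C \<alpha> s *
    (\<Sum>j\<in>fdb_tuples n. fact n / (\<Prod>l=1..n. fact (j l)) *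
        (\<Prod>l=1..n. (1 / fact l ^ j l) * (yf C (2/\<alpha>) l s) ^ j l))"
proof -
  let ?c = "\<lambda>l. yf C (2/\<alpha>) l s / fact l"
  have T: "Tset {1..n} (\<lambda>l. l) n = fdb_tuples n" unfolding Tset_def fdb_tuples_def by simp
  have "fps_nth (Psi ?c n) n = (\<Sum>j\<in>fdb_tuples n. \<Prod>l\<in>{1..n}. ?c l ^ j l / fact (j l))"
    unfolding Psi_def using prod_Fexp_nth[of "{1..n}" "\<lambda>l. l" ?c n] T by simp
  then have "(deriv ^^ n) (LapI C \<alpha>) s = LapI C \<alpha> s * (fact n * (\<Sum>j\<in>fdb_tuples n. \<Prod>l\<in>{1..n}. ?c l ^ j l / fact (j l)))"
    using hh_closed[OF s, of n n C \<alpha>] by simp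
  also have "fact n * (\<Sum>j\<in>fdb_tuples n. \<Prod>l\<in>{1..n}. ?c l ^ j l / fact (j l))
     = (\<Sum>j\<in>fdb_tuples n. fact n / (\<Prod>l=1..n. fact (j l)) *
        (\<Prod>l=1..n. (1 / fact l ^ j l) * (yf C (2/\<alpha>) l s) ^ j l))"
    unfolding sum_distrib_left
  proof (intro sum.cong refl)
    fix j
    have "(\<Prod>l\<in>{1..n}. ?c l ^ j l / fact (j l)) = (\<Prod>l=1..n. (1 / fact l ^ j l) * (yf C (2/\<alpha>) l s) ^ j l) / (\<Prod>l=1..n. fact (j l))"
      by (subst prod_dividef[symmetric]) (intro prod.cong refl, simp add: power_divide)
    then show "fact n * (\<Prod>l\<in>{1..n}. ?c l ^ j l / fact (j l)) = fact n / (\<Prod>l=1..n. fact (j l)) *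
        (\<Prod>l=1..n. (1 / fact l ^ j l) * (yf C (2/\<alpha>) l s) ^ j l)"
      by simp
  qed
  finally show ?thesis .
qed

lemma pow_exp_bound:
  fixes u :: real assumes u: "u \<ge> 0"
  shows "u ^ m \<le> real m ^ m * exp u"
proof (cases "m = 0")
  case True then show ?thesis using u by simp
next
  case False
  then have mp: "real m > 0" by simp
  have "(u / real m) ^ m \<le> (1 + u / real m) ^ m"
    using u mp by (intro power_mono) auto
  also have "\<dots> \<le> exp u"
    using u False by (intro exp_ge_one_plus_x_over_n_power_n) auto
  finally have "u ^ m / real m ^ m \<le> exp u" by (simp add: power_divide)
  then show ?thesis using mp by (simp add: field_simps)
qed

lemma polygauss_integrable:
  fixes \<kappa> :: real assumes k: "\<kappa> > 0"
  shows "integrable (lborel :: (real^2) measure) (\<lambda>x. ((norm x)\<^sup>2) ^ m * exp (- \<kappa> * (norm x)\<^sup>2))"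
proof (rule Bochner_Integration.integrable_bound[where f = "\<lambda>x. (2 * real m / \<kappa>) ^ m * exp (- (\<kappa>/2) * (norm x)\<^sup>2)"])
  let ?M = "(2 * real m / \<kappa>) ^ m"
  show "integrable (lborel :: (real^2) measure) (\<lambda>x. ?M * exp (- (\<kappa>/2) * (norm x)\<^sup>2))"
    using gauss2(1)[of "\<kappa>/2"] k by simp
  show "(\<lambda>x::real^2. ((norm x)\<^sup>2) ^ m * exp (- \<kappa> * (norm x)\<^sup>2)) \<in> borel_measurable lborel" by measurable
  show "AE x in (lborel :: (real^2) measure). norm (((norm x)\<^sup>2) ^ m * exp (- \<kappa> * (norm x)\<^sup>2)) \<le> norm (?M * exp (- (\<kappa>/2) * (norm x)\<^sup>2))"
  proof (rule AE_I2)
    fix x :: "real^2" assume "x \<in> space lborel"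
    define t where "t = (norm x)\<^sup>2"
    have t: "t \<ge> 0" unfolding t_def by simp
    have "(\<kappa> * t / 2) ^ m \<le> real m ^ m * exp (\<kappa> * t / 2)"
      using t k by (intro pow_exp_bound) auto
    then have "(\<kappa> / 2) ^ m * t ^ m \<le> real m ^ m * exp (\<kappa> * t / 2)"
      by (simp add: power_mult_distrib power_divide field_simps)
    then have "t ^ m \<le> (2 / \<kappa>) ^ m * (real m ^ m * exp (\<kappa> * t / 2))"
      using k by (simp add: power_divide field_simps)
    then have "t ^ m * exp (- \<kappa> * t) \<le> (2 / \<kappa>) ^ m * (real m ^ m * exp (\<kappa> * t / 2)) * exp (- \<kappa> * t)"
      by (intro mult_right_mono) auto
    also have "\<dots> = ?M * exp (- (\<kappa>/2) * t)"
    proof -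
      have e1: "(2 / \<kappa>) ^ m * real m ^ m = ?M"
        by (simp add: power_mult_distrib[symmetric])
      have e2: "exp (\<kappa> * t / 2) * exp (- \<kappa> * t) = exp (- (\<kappa>/2) * t)"
        unfolding mult_exp_exp by (simp add: algebra_simps)
      show ?thesis using e1 e2 by (metis mult.assoc)
    qed
    finally show "norm (((norm x)\<^sup>2) ^ m * exp (- \<kappa> * (norm x)\<^sup>2)) \<le> norm (?M * exp (- (\<kappa>/2) * (norm x)\<^sup>2))"
      unfolding t_def[symmetric] using t k by simp
  qed
qed

lemma Beta_pos: "a > 0 \<Longrightarrow> b > 0 \<Longrightarrow> Beta a b > (0::real)"
  unfolding Beta_def by (simp add: Gamma_real_pos)

lemma Ccoef_pos:
  assumes "\<alpha> > 2" "\<Psi> \<ge> 1"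
  shows "Ccoef \<alpha> \<Psi> > 0"
proof -
  have "(\<Sum>m = 1..\<Psi>. real (\<Psi> choose m) * Beta (real \<Psi> - real m + 2 / \<alpha>) (real m - 2 / \<alpha>)) > 0"
  proof (rule sum_pos)
    show "finite {1..\<Psi>}" by simp
    show "{1..\<Psi>} \<noteq> {}" using assms by simp
    fix m assume m: "m \<in> {1..\<Psi>}"
    have a: "2 / \<alpha> < 1" "2 / \<alpha> > 0" using assms by (auto simp: field_simps)
    have "real m \<ge> 1" "real m \<le> real \<Psi>" using m by auto
    then have "real \<Psi> - real m + 2 / \<alpha> > 0" "real m - 2 / \<alpha> > 0" using a by linarith+
    then have "Beta (real \<Psi> - real m + 2 / \<alpha>) (real m - 2 / \<alpha>) > 0"
      by (rule Beta_pos)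
    moreover have "real (\<Psi> choose m) > 0" using m by simp
    ultimately show "real (\<Psi> choose m) * Beta (real \<Psi> - real m + 2 / \<alpha>) (real m - 2 / \<alpha>) > 0" by simp
  qed
  then show ?thesis unfolding Ccoef_def using assms by simp
qed

lemma sx_powr:
  assumes "\<beta> > 0" "Pk > 0" "\<alpha> > 0"
  shows "sx \<beta> Pk \<alpha> x powr (2/\<alpha>) = (\<beta>/Pk) powr (2/\<alpha>) * (norm x)\<^sup>2"
proof -
  have e: "sx \<beta> Pk \<alpha> x = (\<beta>/Pk) * norm x powr \<alpha>" unfolding sx_def by simp
  have "sx \<beta> Pk \<alpha> x powr (2/\<alpha>) = (\<beta>/Pk) powr (2/\<alpha>) * (norm x powr \<alpha>) powr (2/\<alpha>)"
    by (simp only: e powr_mult)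
  also have "(norm x powr \<alpha>) powr (2/\<alpha>) = norm x powr 2"
    using assms by (simp add: powr_powr)
  also have "norm x powr 2 = (norm x)\<^sup>2" by simp
  finally show ?thesis .
qed

lemma sx_pos:
  assumes "\<beta> > 0" "Pk > 0" "x \<noteq> 0"
  shows "sx \<beta> Pk \<alpha> x > 0"
  unfolding sx_def using assms by simp

lemma powexp:
  assumes s: "s > 0" and j: "j \<in> fdb_tuples i"
  shows "s ^ i * (\<Prod>l=1..i. (s powr (a - real l)) ^ j l) = (s powr a) ^ (\<Sum>l=1..i. j l)"
proof -
  have ji: "(\<Sum>l=1..i. l * j l) = i" using j unfolding fdb_tuples_def by auto
  have ri: "real i = (\<Sum>l=1..i. real l * real (j l))"
    using arg_cong[OF ji, of real] by simp
  have "s ^ i * (\<Prod>l=1..i. (s powr (a - real l)) ^ j l)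
      = s powr (real i) * (\<Prod>l=1..i. s powr (real (j l) * (a - real l)))"
    using s by (simp add: powr_realpow powr_power)
  also have "\<dots> = s powr (real i + (\<Sum>l=1..i. real (j l) * (a - real l)))"
    using s by (simp add: powr_sum powr_add)
  also have "real i + (\<Sum>l=1..i. real (j l) * (a - real l)) = real (\<Sum>l=1..i. j l) * a"
    unfolding ri by (simp add: sum.distrib[symmetric] sum_distrib_right sum_distrib_left algebra_simps)
  also have "s powr (real (\<Sum>l=1..i. j l) * a) = (s powr a) ^ (\<Sum>l=1..i. j l)"
    using s by (simp add: powr_power)
  finally show ?thesis .
qed

lemma term_integral:
  fixes Cc bk Pk \<alpha> :: real and i :: nat
  assumes Cc: "Cc > 0" and bpos: "bk > 0" and ppos: "Pk > 0" and al: "\<alpha> > 2"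
  shows "(\<integral>x. (- sx bk Pk \<alpha> x) ^ i * (deriv ^^ i) (LapI Cc \<alpha>) (sx bk Pk \<alpha> x) \<partial>(lborel :: (real ^ 2) measure))
    = (\<Sum>j \<in> fdb_tuples i. fact i / (\<Prod>l = 1..i. fact (j l)) *
                      (\<integral>x. (- sx bk Pk \<alpha> x) ^ i
                            * exp (- Cc * sx bk Pk \<alpha> x powr (2 / \<alpha>))
                            * (\<Prod>l = 1..i. (1 / fact l ^ j l) *
                                 (- Cc * sx bk Pk \<alpha> x powr (2 / \<alpha> - real l)
                                   * (\<Prod>n < l. 2 / \<alpha> - real n)) ^ j l)
                        \<partial>(lborel :: (real ^ 2) measure)))"
proof -
  define S where "S = sx bk Pk \<alpha>"
  define R where "R = (\<lambda>j x. (- S x) ^ i * exp (- Cc * S x powr (2 / \<alpha>))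
                            * (\<Prod>l = 1..i. (1 / fact l ^ j l) *
                                 (- Cc * S x powr (2 / \<alpha> - real l) * (\<Prod>n < l. 2 / \<alpha> - real n)) ^ j l))"
  define co where "co = (\<lambda>j. fact i / (\<Prod>l = 1..i. fact (j l)) :: real)"
  define bb where "bb = (bk / Pk) powr (2 / \<alpha>)"
  have bb: "bb > 0" unfolding bb_def using bpos ppos by simp
  define \<kappa> where "\<kappa> = Cc * bb"
  have kp: "\<kappa> > 0" unfolding \<kappa>_def using Cc bb by simp
  have alp: "\<alpha> > 0" using al by simp
  have Spow: "\<And>x. S x powr (2/\<alpha>) = bb * (norm x)\<^sup>2"
    unfolding S_def bb_def using sx_powr[OF bpos ppos alp] by simp
  have Spos: "\<And>x. x \<noteq> 0 \<Longrightarrow> S x > 0" unfolding S_def using sx_pos[OF bpos ppos] by simp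
  have pt: "(- S x) ^ i * (deriv ^^ i) (LapI Cc \<alpha>) (S x) = (\<Sum>j\<in>fdb_tuples i. co j * R j x)"
    if x: "x \<noteq> 0" for x
  proof -
    have "(- S x) ^ i * (deriv ^^ i) (LapI Cc \<alpha>) (S x) = (- S x) ^ i * (LapI Cc \<alpha> (S x) *
      (\<Sum>j\<in>fdb_tuples i. co j * (\<Prod>l=1..i. (1 / fact l ^ j l) * (yf Cc (2/\<alpha>) l (S x)) ^ j l)))"
      unfolding co_def by (simp add: faa[OF Spos[OF x]])
    also have "\<dots> = (\<Sum>j\<in>fdb_tuples i. co j * R j x)"
      unfolding sum_distrib_left
      by (intro sum.cong refl) (simp add: R_def yf_def LapI_def mult_ac)
    finally show ?thesis .
  qed
  have meas: "\<And>j. R j \<in> borel_measurable (lborel :: (real^2) measure)"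
    unfolding R_def S_def sx_def by measurable
  have integ: "integrable (lborel :: (real^2) measure) (R j)" if j: "j \<in> fdb_tuples i" for j
  proof -
    define m where "m = (\<Sum>l=1..i. j l)"
    define u where "u = (\<lambda>l. (1 / fact l ^ j l) * (- Cc * (\<Prod>n < l. 2 / \<alpha> - real n)) ^ j l :: real)"
    define K where "K = (- 1) ^ i * (\<Prod>l=1..i. u l) * bb ^ m"
    have eq: "R j x = K * (((norm x)\<^sup>2) ^ m * exp (- \<kappa> * (norm x)\<^sup>2))" if x: "x \<noteq> 0" for x
    proof -
      have s: "S x > 0" using Spos[OF x] .
      have f1: "(\<Prod>l = 1..i. (1 / fact l ^ j l) * (- Cc * S x powr (2 / \<alpha> - real l) * (\<Prod>n < l. 2 / \<alpha> - real n)) ^ j l)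
          = (\<Prod>l=1..i. u l) * (\<Prod>l=1..i. (S x powr (2 / \<alpha> - real l)) ^ j l)"
      proof -
        have pe: "(- Cc * A * B) ^ n = (- Cc * B) ^ n * A ^ n" for A B :: real and n :: nat
        proof -
          have "- Cc * A * B = (- Cc * B) * A" by simp
          then show ?thesis by (simp only: power_mult_distrib)
        qed
        show ?thesis
          unfolding prod.distrib[symmetric] u_def pe by (simp only: mult.assoc)
      qed
      have "R j x = (- 1) ^ i * (\<Prod>l=1..i. u l) * exp (- Cc * S x powr (2 / \<alpha>)) *
                 (S x ^ i * (\<Prod>l=1..i. (S x powr (2 / \<alpha> - real l)) ^ j l))"
        unfolding R_def f1 by (simp add: power_minus[of "S x"] mult_ac)
      also have "\<dots> = (- 1) ^ i * (\<Prod>l=1..i. u l) * exp (- Cc * S x powr (2 / \<alpha>)) * (S x powr (2/\<alpha>)) ^ m"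
        unfolding m_def using powexp[OF s j] by simp
      also have "\<dots> = K * (((norm x)\<^sup>2) ^ m * exp (- \<kappa> * (norm x)\<^sup>2))"
        unfolding Spow K_def \<kappa>_def by (simp add: power_mult_distrib mult_ac)
      finally show ?thesis .
    qed
    have "integrable (lborel :: (real^2) measure) (\<lambda>x. K * (((norm x)\<^sup>2) ^ m * exp (- \<kappa> * (norm x)\<^sup>2)))"
      using polygauss_integrable[OF kp, of m] by simp
    then show ?thesis
    proof (rule integrable_cong_AE_imp)
      show "R j \<in> borel_measurable lborel" by (rule meas)
      show "AE x in (lborel :: (real^2) measure). K * (((norm x)\<^sup>2) ^ m * exp (- \<kappa> * (norm x)\<^sup>2)) = R j x"
        using AE_lborel_singleton[of "0 :: real^2"] by eventually_elim (simp add: eq)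
    qed
  qed
  define v where "v = (- S 0) ^ i * (deriv ^^ i) (LapI Cc \<alpha>) (S 0)"
  have Lf: "(\<lambda>x. (- S x) ^ i * (deriv ^^ i) (LapI Cc \<alpha>) (S x))
      = (\<lambda>x. if x = 0 then v else (\<Sum>j\<in>fdb_tuples i. co j * R j x))"
    by (rule ext) (simp add: v_def pt)
  have fin: "finite (fdb_tuples i)"
    unfolding fdb_tuples_def by (rule finite_subset[of _ "PiE {1..i} (\<lambda>_. {..i})"]) (auto intro!: finite_PiE)
  have "(\<integral>x. (- S x) ^ i * (deriv ^^ i) (LapI Cc \<alpha>) (S x) \<partial>(lborel :: (real ^ 2) measure))
      = (\<integral>x. (if x = 0 then v else (\<Sum>j\<in>fdb_tuples i. co j * R j x)) \<partial>(lborel :: (real ^ 2) measure))"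
    by (simp only: Lf)
  also have "\<dots> = (\<integral>x. (\<Sum>j\<in>fdb_tuples i. co j * R j x) \<partial>(lborel :: (real ^ 2) measure))"
  proof (rule integral_cong_AE)
    show "(\<lambda>x::real^2. if x = 0 then v else (\<Sum>j\<in>fdb_tuples i. co j * R j x)) \<in> borel_measurable lborel"
      using meas by measurable
    show "(\<lambda>x::real^2. \<Sum>j\<in>fdb_tuples i. co j * R j x) \<in> borel_measurable lborel"
      using meas by measurable
    show "AE x in (lborel :: (real^2) measure). (if x = 0 then v else (\<Sum>j\<in>fdb_tuples i. co j * R j x)) = (\<Sum>j\<in>fdb_tuples i. co j * R j x)"
      using AE_lborel_singleton[of "0 :: real^2"] by eventually_elim simp
  qed
  also have "\<dots> = (\<Sum>j\<in>fdb_tuples i. (\<integral>x. co j * R j x \<partial>(lborel :: (real ^ 2) measure)))"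
    by (rule Bochner_Integration.integral_sum[where f = "\<lambda>j x. co j * R j x"]) (use integ in auto)
  also have "\<dots> = (\<Sum>j\<in>fdb_tuples i. co j * (\<integral>x. R j x \<partial>(lborel :: (real ^ 2) measure)))"
    by simp
  finally show ?thesis unfolding co_def R_def S_def .
qed

theorem corollary5:
  fixes K :: nat and lam P \<beta> :: "nat \<Rightarrow> real" and \<alpha> :: real
    and \<Delta> \<Psi> :: "nat \<Rightarrow> nat" and k :: nat
  assumes "\<And>j. j \<in> {1..K} \<Longrightarrow> lam j > 0"
    and "\<And>j. j \<in> {1..K} \<Longrightarrow> P j > 0"
    and "\<And>j. j \<in> {1..K} \<Longrightarrow> \<beta> j > 0"
    and "\<And>j. j \<in> {1..K} \<Longrightarrow> \<Delta> j \<ge> 1"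
    and "\<And>j. j \<in> {1..K} \<Longrightarrow> \<Psi> j \<ge> 1"
    and "\<alpha> > 2"
    and "k \<in> {1..K}"
  shows "(\<Delta> k = 1 \<longrightarrow>
            Ak (Ctot K lam P \<alpha> \<Psi>) \<alpha> (\<beta> k) (P k) (\<Delta> k)
              = pi * P k powr (2 / \<alpha>) * \<beta> k powr (- 2 / \<alpha>) / Ctot K lam P \<alpha> \<Psi>)
       \<and> (\<Delta> k > 1 \<longrightarrow>
            Ak (Ctot K lam P \<alpha> \<Psi>) \<alpha> (\<beta> k) (P k) (\<Delta> k)
              = (\<Sum>i < \<Delta> k. 1 / fact i *
                   (\<Sum>j \<in> fdb_tuples i. fact i / (\<Prod>l = 1..i. fact (j l)) *
                      (\<integral>x. (- sx (\<beta> k) (P k) \<alpha> x) ^ i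
                            * exp (- Ctot K lam P \<alpha> \<Psi> * sx (\<beta> k) (P k) \<alpha> x powr (2 / \<alpha>))
                            * (\<Prod>l = 1..i. (1 / fact l ^ j l) *
                                 (- Ctot K lam P \<alpha> \<Psi> * sx (\<beta> k) (P k) \<alpha> x powr (2 / \<alpha> - real l)
                                   * (\<Prod>n < l. 2 / \<alpha> - real n)) ^ j l)
                        \<partial>(lborel :: (real ^ 2) measure)))))"
proof -
  define Cc where "Cc = Ctot K lam P \<alpha> \<Psi>"
  have alp: "\<alpha> > 0" using assms(6) by simp
  have Cpos: "Cc > 0"
    unfolding Cc_def Ctot_def
  proof (rule sum_pos)
    show "finite {1..K}" by simp
    show "{1..K} \<noteq> {}" using assms(7) by auto
    fix j assume j: "j \<in> {1..K}"
    show "lam j * P j powr (2 / \<alpha>) * Ccoef \<alpha> (\<Psi> j) > 0"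
      using assms(1)[OF j] assms(2)[OF j] Ccoef_pos[OF assms(6) assms(5)[OF j]] by simp
  qed
  have bk: "\<beta> k > 0" and pk: "P k > 0" using assms(2,3,7) by auto
  show ?thesis
    unfolding Cc_def[symmetric]
  proof (intro conjI impI)
    assume d1: "\<Delta> k = 1"
    define bb where "bb = (\<beta> k / P k) powr (2 / \<alpha>)"
    have bb: "bb > 0" unfolding bb_def using bk pk by simp
    have L: "\<And>x. LapI Cc \<alpha> (sx (\<beta> k) (P k) \<alpha> x) = exp (- (Cc * bb) * (norm x)\<^sup>2)"
      unfolding LapI_def sx_powr[OF bk pk alp] bb_def[symmetric] by (simp add: mult_ac)
    have "Ak Cc \<alpha> (\<beta> k) (P k) (\<Delta> k) = (\<integral>x. LapI Cc \<alpha> (sx (\<beta> k) (P k) \<alpha> x) \<partial>(lborel :: (real ^ 2) measure))"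
      unfolding Ak_def d1 by simp
    also have "\<dots> = pi / (Cc * bb)"
      unfolding L using gauss2(2)[of "Cc * bb"] Cpos bb by simp
    also have "\<dots> = pi * P k powr (2 / \<alpha>) * \<beta> k powr (- 2 / \<alpha>) / Cc"
    proof -
      define B where "B = \<beta> k powr (2 / \<alpha>)"
      define Q where "Q = P k powr (2 / \<alpha>)"
      have e1: "\<beta> k powr (- 2 / \<alpha>) = 1 / B"
        unfolding B_def by (simp add: powr_minus_divide[symmetric])
      have e2: "bb = B / Q" unfolding bb_def B_def Q_def by (rule powr_divide)
      have BQ: "B > 0" "Q > 0" unfolding B_def Q_def using bk pk by auto
      show ?thesis unfolding e1 e2 Q_def[symmetric] using BQ Cpos by (simp add: field_simps)
    qed
    finally show "Ak Cc \<alpha> (\<beta> k) (P k) (\<Delta> k) = pi * P k powr (2 / \<alpha>) * \<beta> k powr (- 2 / \<alpha>) / Cc" .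
  next
    assume "\<Delta> k > 1"
    show "Ak Cc \<alpha> (\<beta> k) (P k) (\<Delta> k)
              = (\<Sum>i < \<Delta> k. 1 / fact i *
                   (\<Sum>j \<in> fdb_tuples i. fact i / (\<Prod>l = 1..i. fact (j l)) *
                      (\<integral>x. (- sx (\<beta> k) (P k) \<alpha> x) ^ i
                            * exp (- Cc * sx (\<beta> k) (P k) \<alpha> x powr (2 / \<alpha>))
                            * (\<Prod>l = 1..i. (1 / fact l ^ j l) *
                                 (- Cc * sx (\<beta> k) (P k) \<alpha> x powr (2 / \<alpha> - real l)
                                   * (\<Prod>n < l. 2 / \<alpha> - real n)) ^ j l)
                        \<partial>(lborel :: (real ^ 2) measure))))"
      unfolding Ak_def
      by (intro sum.cong refl arg_cong2[where f = "(*)"] term_integral[OF Cpos bk pk assms(6)])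
  qed
qed

end
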